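(* Let $\mathsf{X}=\mathbb{R}^d$, $\mathsf{Y}=\mathbb{R}^{d'}$, $T\in\mathbb{N}$, and consider a hidden Markov model with initial density $\mu$ on $\mathsf{X}$, transition density $f$ on $\mathsf{X}$, and observation density $g:\mathsf{X}\times\mathsf{Y}\to\mathbb{R}_+$ (bounded, continuous), i.e. $(X_t)$ is a Markov chain with $X_1\sim\mu$, $X_t\mid X_{t-1}=x\sim f(x,\cdot)$, and let $\mathbb{E}$ denote expectation under this law. Fix observations $y_{1:T}\in\mathsf{Y}^T$ and let $L:=\mathbb{E}\left[\prod_{t=1}^T g(X_t,y_t)\right]>0$. Define $\boldsymbol\psi^*=(\psi_1^*,\dots,\psi_T^* )$ by $\psi_T^*(x_T):=g(x_T,y_T)$ and $$\psi_t^*(x_t):=g(x_t,y_t)\,\mathbb{E}\Big[\prod_{p=t+1}^T g(X_p,y_p)\,\Big|\,X_t=x_t\Big],\qquad x_t\in\mathsf{X},\ t\in\{1,\dots,T-1\},$$ and assume each $\psi_t^*$ is positive. Then for every $N\in\mathbb{N}$, the estimate $Z^N_{\boldsymbol\psi^*}$ produced by the $\boldsymbol\psi^*$-auxiliary particle filter with $N$ particles satisfies $Z^N_{\boldsymbol\psi^*}=L$ with probability $1$.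
   Context: For a transition density $f$ and function $\psi$ write $f(x,\psi):=\int_{\mathsf{X}}f(x,x')\psi(x')\,dx'$. Given positive functions $\boldsymbol\psi=(\psi_1,\dots,\psi_T)$, define $\tilde\psi_t(x):=f(x,\psi_{t+1})$ for $t\in\{1,\dots,T-1\}$, $\tilde\psi_T\equiv 1$, $\tilde\psi_0:=\int\mu(x_1)\psi_1(x_1)\,dx_1$, and the twisted model $\mu_1^{\boldsymbol\psi}(x_1):=\mu(x_1)\psi_1(x_1)/\tilde\psi_0$; $f_t^{\boldsymbol\psi}(x_{t-1},x_t):=f(x_{t-1},x_t)\psi_t(x_t)/\tilde\psi_{t-1}(x_{t-1})$ ($t\ge2$); $g_1^{\boldsymbol\psi}(x_1):=g(x_1,y_1)\tilde\psi_1(x_1)\tilde\psi_0/\psi_1(x_1)$, $g_t^{\boldsymbol\psi}(x_t):=g(x_t,y_t)\tilde\psi_t(x_t)/\psi_t(x_t)$ ($t\ge2$). The $\boldsymbol\psi$-auxiliary particle filter with $N$ particles: sample $\xi_1^i\sim\mu_1^{\boldsymbol\psi}$ independently for $i=1,\dots,N$; for $t=2,\dots,T$ sample independently $\xi_t^i\sim \sum_{j=1}^N g_{t-1}^{\boldsymbol\psi}(\xi_{t-1}^j)f_t^{\boldsymbol\psi}(\xi_{t-1}^j,\cdot)\big/\sum_{j=1}^N g_{t-1}^{\boldsymbol\psi}(\xi_{t-1}^j)$, $i=1,\dots,N$. Its estimate is $Z^N_{\boldsymbol\psi}:=\prod_{t=1}^T\big[\frac1N\sum_{i=1}^N g_t^{\boldsymbol\psi}(\xi_t^i)\big]$.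 *)

theory Defs
  imports "HOL-Probability.Probability"
begin

text \<open>State space X = 'a (a Euclidean space, i.e. R^d with d = DIM('a)),
  observation space Y = 'b.  Densities are with respect to Lebesgue measure lborel.
  Time indices run over 1..T, particle indices over 1..N.\<close>

text \<open>Marginal likelihood L = E[prod_{t=1}^T g(X_t,y_t)] where (X_1,...,X_T) has joint
  density mu(x_1) prod_{t=2}^T f(x_{t-1},x_t) on X^T.\<close>
definition hmm_L :: "('a::euclidean_space \<Rightarrow> real) \<Rightarrow> ('a \<Rightarrow> 'a \<Rightarrow> real)
    \<Rightarrow> ('a \<Rightarrow> 'b \<Rightarrow> real) \<Rightarrow> (nat \<Rightarrow> 'b) \<Rightarrow> nat \<Rightarrow> real" where
  "hmm_L \<mu> f g y T =
     (\<integral>z. \<mu> (z 1) * (\<Prod>t\<in>{2..T}. f (z (t - 1)) (z t)) * (\<Prod>t\<in>{1..T}. g (z t) (y t))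
        \<partial>(PiM {1..T} (\<lambda>_. lborel)))"

text \<open>E[prod_{p=t+1}^T g(X_p,y_p) | X_t = x]: expectation under the law of
  (X_{t+1},...,X_T) given X_t = x, which has density prod_{p=t+1}^T f(x_{p-1},x_p)
  with x_t = x.\<close>
definition hmm_future :: "('a::euclidean_space \<Rightarrow> 'a \<Rightarrow> real)
    \<Rightarrow> ('a \<Rightarrow> 'b \<Rightarrow> real) \<Rightarrow> (nat \<Rightarrow> 'b) \<Rightarrow> nat \<Rightarrow> nat \<Rightarrow> 'a \<Rightarrow> real" where
  "hmm_future f g y T t x =
     (\<integral>z. (\<Prod>p\<in>{Suc t..T}. f (if p = Suc t then x else z (p - 1)) (z p) * g (z p) (y p))
        \<partial>(PiM {Suc t..T} (\<lambda>_. lborel)))"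

definition psi_star :: "('a::euclidean_space \<Rightarrow> 'a \<Rightarrow> real)
    \<Rightarrow> ('a \<Rightarrow> 'b \<Rightarrow> real) \<Rightarrow> (nat \<Rightarrow> 'b) \<Rightarrow> nat \<Rightarrow> nat \<Rightarrow> 'a \<Rightarrow> real" where
  "psi_star f g y T t x =
     (if t = T then g x (y T) else g x (y t) * hmm_future f g y T t x)"

definition kapply :: "('a::euclidean_space \<Rightarrow> 'a \<Rightarrow> real) \<Rightarrow> 'a \<Rightarrow> ('a \<Rightarrow> real) \<Rightarrow> real" where
  "kapply f x \<psi> = (\<integral>x'. f x x' * \<psi> x' \<partial>lborel)"

definition psi_tilde :: "('a::euclidean_space \<Rightarrow> 'a \<Rightarrow> real) \<Rightarrow> (nat \<Rightarrow> 'a \<Rightarrow> real)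
    \<Rightarrow> nat \<Rightarrow> nat \<Rightarrow> 'a \<Rightarrow> real" where
  "psi_tilde f \<psi> T t x = (if t = T then 1 else kapply f x (\<psi> (Suc t)))"

definition psi_tilde0 :: "('a::euclidean_space \<Rightarrow> real) \<Rightarrow> (nat \<Rightarrow> 'a \<Rightarrow> real) \<Rightarrow> real" where
  "psi_tilde0 \<mu> \<psi> = (\<integral>x. \<mu> x * \<psi> 1 x \<partial>lborel)"

definition tw_mu :: "('a::euclidean_space \<Rightarrow> real) \<Rightarrow> (nat \<Rightarrow> 'a \<Rightarrow> real) \<Rightarrow> 'a \<Rightarrow> real" where
  "tw_mu \<mu> \<psi> x = \<mu> x * \<psi> 1 x / psi_tilde0 \<mu> \<psi>"

definition tw_f :: "('a::euclidean_space \<Rightarrow> 'a \<Rightarrow> real) \<Rightarrow> (nat \<Rightarrow> 'a \<Rightarrow> real)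
    \<Rightarrow> nat \<Rightarrow> nat \<Rightarrow> 'a \<Rightarrow> 'a \<Rightarrow> real" where
  "tw_f f \<psi> T t x x' = f x x' * \<psi> t x' / psi_tilde f \<psi> T (t - 1) x"

definition tw_g :: "('a::euclidean_space \<Rightarrow> real) \<Rightarrow> ('a \<Rightarrow> 'a \<Rightarrow> real)
    \<Rightarrow> ('a \<Rightarrow> 'b \<Rightarrow> real) \<Rightarrow> (nat \<Rightarrow> 'b) \<Rightarrow> (nat \<Rightarrow> 'a \<Rightarrow> real) \<Rightarrow> nat \<Rightarrow> nat \<Rightarrow> 'a \<Rightarrow> real" where
  "tw_g \<mu> f g y \<psi> T t x =
     (if t = 1 then g x (y 1) * psi_tilde f \<psi> T 1 x * psi_tilde0 \<mu> \<psi> / \<psi> 1 x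
      else g x (y t) * psi_tilde f \<psi> T t x / \<psi> t x)"

text \<open>Joint density of all particles xi(t,i), t in 1..T, i in 1..N, of the
  psi-auxiliary particle filter (w.r.t. Lebesgue measure on X^(T*N)):
  xi(1,i) iid ~ mu_1^psi, and given generation t-1, xi(t,i) iid from the mixture.\<close>
definition apf_density :: "('a::euclidean_space \<Rightarrow> real) \<Rightarrow> ('a \<Rightarrow> 'a \<Rightarrow> real)
    \<Rightarrow> ('a \<Rightarrow> 'b \<Rightarrow> real) \<Rightarrow> (nat \<Rightarrow> 'b) \<Rightarrow> (nat \<Rightarrow> 'a \<Rightarrow> real) \<Rightarrow> nat \<Rightarrow> nat
    \<Rightarrow> (nat \<times> nat \<Rightarrow> 'a) \<Rightarrow> real" where
  "apf_density \<mu> f g y \<psi> T N \<xi> =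
     (\<Prod>i\<in>{1..N}. tw_mu \<mu> \<psi> (\<xi> (1, i))) *
     (\<Prod>t\<in>{2..T}. \<Prod>i\<in>{1..N}.
        (\<Sum>j\<in>{1..N}. tw_g \<mu> f g y \<psi> T (t - 1) (\<xi> (t - 1, j)) *
                       tw_f f \<psi> T t (\<xi> (t - 1, j)) (\<xi> (t, i)))
        / (\<Sum>j\<in>{1..N}. tw_g \<mu> f g y \<psi> T (t - 1) (\<xi> (t - 1, j))))"

definition apf_law :: "('a::euclidean_space \<Rightarrow> real) \<Rightarrow> ('a \<Rightarrow> 'a \<Rightarrow> real)
    \<Rightarrow> ('a \<Rightarrow> 'b \<Rightarrow> real) \<Rightarrow> (nat \<Rightarrow> 'b) \<Rightarrow> (nat \<Rightarrow> 'a \<Rightarrow> real) \<Rightarrow> nat \<Rightarrow> nat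
    \<Rightarrow> (nat \<times> nat \<Rightarrow> 'a) measure" where
  "apf_law \<mu> f g y \<psi> T N =
     density (PiM ({1..T} \<times> {1..N}) (\<lambda>_. lborel))
             (\<lambda>\<xi>. ennreal (apf_density \<mu> f g y \<psi> T N \<xi>))"

definition apf_Z :: "('a::euclidean_space \<Rightarrow> real) \<Rightarrow> ('a \<Rightarrow> 'a \<Rightarrow> real)
    \<Rightarrow> ('a \<Rightarrow> 'b \<Rightarrow> real) \<Rightarrow> (nat \<Rightarrow> 'b) \<Rightarrow> (nat \<Rightarrow> 'a \<Rightarrow> real) \<Rightarrow> nat \<Rightarrow> nat
    \<Rightarrow> (nat \<times> nat \<Rightarrow> 'a) \<Rightarrow> real" where
  "apf_Z \<mu> f g y \<psi> T N \<xi> =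
     (\<Prod>t\<in>{1..T}. (1 / real N) * (\<Sum>i\<in>{1..N}. tw_g \<mu> f g y \<psi> T t (\<xi> (t, i))))"

end

theory Submission
  imports Defs
begin

definition GG :: "('a::euclidean_space \<Rightarrow> 'a \<Rightarrow> real) \<Rightarrow> ('a \<Rightarrow> 'b \<Rightarrow> real) \<Rightarrow> (nat \<Rightarrow> 'b) \<Rightarrow> nat \<Rightarrow> nat \<Rightarrow> 'a \<Rightarrow> (nat \<Rightarrow> 'a) \<Rightarrow> real" where
 "GG f g y T t x z = (\<Prod>p\<in>{Suc t..T}. f (if p = Suc t then x else z (p - 1)) (z p) * g (z p) (y p))"

definition FF :: "('a::euclidean_space \<Rightarrow> 'a \<Rightarrow> real) \<Rightarrow> ('a \<Rightarrow> 'b \<Rightarrow> real) \<Rightarrow> (nat \<Rightarrow> 'b) \<Rightarrow> nat \<Rightarrow> nat \<Rightarrow> 'a \<Rightarrow> ennreal" where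
 "FF f g y T t x = (\<integral>\<^sup>+z. ennreal (GG f g y T t x z) \<partial>PiM {Suc t..T} (\<lambda>_. lborel))"

lemma psf: "product_sigma_finite (\<lambda>_::nat. lborel::'a::euclidean_space measure)"
  by (simp add: product_sigma_finite_def lborel.sigma_finite_measure_axioms)

lemma GG_meas:
  fixes f :: "'a::euclidean_space \<Rightarrow> 'a \<Rightarrow> real"
  assumes fm: "(\<lambda>(x,x'). f x x') \<in> borel_measurable (lborel \<Otimes>\<^sub>M lborel)"
    and gm: "\<And>v. (\<lambda>x. g x v) \<in> borel_measurable lborel"
  shows "(\<lambda>q. GG f g y T t (fst q) (snd q)) \<in> borel_measurable (lborel \<Otimes>\<^sub>M PiM {Suc t..T} (\<lambda>_. lborel))"
  unfolding GG_def
proof (rule borel_measurable_prod, rule borel_measurable_times)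
  fix p assume p: "p \<in> {Suc t..T}"
  have c: "(\<lambda>q. snd q j) \<in> measurable (lborel \<Otimes>\<^sub>M PiM {Suc t..T} (\<lambda>_. lborel)) (lborel::'a measure)"
    if "j \<in> {Suc t..T}" for j
    using that by measurable
  have a: "(\<lambda>q. if p = Suc t then fst q else snd q (p - 1)) \<in> measurable (lborel \<Otimes>\<^sub>M PiM {Suc t..T} (\<lambda>_. lborel)) (lborel::'a measure)"
  proof (cases "p = Suc t")
    case True then show ?thesis by simp
  next
    case False
    then have "p - 1 \<in> {Suc t..T}" using p by auto
    then show ?thesis using c[of "p - 1"] False by simp
  qed
  from measurable_comp[OF measurable_Pair[OF a c[OF p]] fm]
  show "(\<lambda>q. f (if p = Suc t then fst q else snd q (p - 1)) (snd q p)) \<in> borel_measurable (lborel \<Otimes>\<^sub>M PiM {Suc t..T} (\<lambda>_. lborel))"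
    by (simp add: comp_def)
  show "(\<lambda>q. g (snd q p) (y p)) \<in> borel_measurable (lborel \<Otimes>\<^sub>M PiM {Suc t..T} (\<lambda>_. lborel))"
    using measurable_comp[OF c[OF p] gm] by (simp add: comp_def)
qed

lemma GG_meas1:
  fixes f :: "'a::euclidean_space \<Rightarrow> 'a \<Rightarrow> real"
  assumes fm: "(\<lambda>(x,x'). f x x') \<in> borel_measurable (lborel \<Otimes>\<^sub>M lborel)"
    and gm: "\<And>v. (\<lambda>x. g x v) \<in> borel_measurable lborel"
  shows "(\<lambda>z. GG f g y T t x z) \<in> borel_measurable (PiM {Suc t..T} (\<lambda>_. lborel))"
proof -
  have "(\<lambda>z. (x, z)) \<in> measurable (PiM {Suc t..T} (\<lambda>_. lborel)) (lborel \<Otimes>\<^sub>M PiM {Suc t..T} (\<lambda>_. lborel))"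
    by simp
  from measurable_comp[OF this GG_meas[where g=g, OF fm gm]] show ?thesis by (simp add: comp_def)
qed

lemma FF_meas:
  fixes f :: "'a::euclidean_space \<Rightarrow> 'a \<Rightarrow> real"
  assumes fm: "(\<lambda>(x,x'). f x x') \<in> borel_measurable (lborel \<Otimes>\<^sub>M lborel)"
    and gm: "\<And>v. (\<lambda>x. g x v) \<in> borel_measurable lborel"
  shows "FF f g y T t \<in> borel_measurable lborel"
proof -
  interpret psf: product_sigma_finite "\<lambda>_::nat. lborel::'a measure" by (rule psf)
  interpret P: finite_product_sigma_finite "\<lambda>_::nat. lborel::'a measure" "{Suc t..T}" by standard simp
  have "(\<lambda>q. ennreal (GG f g y T t (fst q) (snd q))) \<in> borel_measurable (lborel \<Otimes>\<^sub>M PiM {Suc t..T} (\<lambda>_. lborel))"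
    using GG_meas[where g=g, OF fm gm] by simp
  then have "(\<lambda>(x,z). ennreal (GG f g y T t x z)) \<in> borel_measurable (lborel \<Otimes>\<^sub>M PiM {Suc t..T} (\<lambda>_. lborel))"
    by (simp add: case_prod_beta')
  from P.borel_measurable_nn_integral[OF this] show ?thesis
    unfolding FF_def[abs_def] by simp
qed

lemma GG_upd:
  assumes "t < T"
  shows "GG f g y T t x (w(Suc t := x')) = f x x' * g x' (y (Suc t)) * GG f g y T (Suc t) x' w"
proof -
  have S: "{Suc t..T} = insert (Suc t) {Suc (Suc t)..T}" using assms by auto
  show ?thesis
    unfolding GG_def S
    by (subst prod.insert) (auto intro!: prod.cong)
qed

lemma FF_rec:
  fixes f :: "'a::euclidean_space \<Rightarrow> 'a \<Rightarrow> real"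
  assumes fm: "(\<lambda>(x,x'). f x x') \<in> borel_measurable (lborel \<Otimes>\<^sub>M lborel)"
    and gm: "\<And>v. (\<lambda>x. g x v) \<in> borel_measurable lborel"
    and fn: "\<And>x x'. f x x' \<ge> 0" and gn: "\<And>x v. g x v \<ge> 0"
    and tT: "t < T"
  shows "FF f g y T t x = (\<integral>\<^sup>+x'. ennreal (f x x' * g x' (y (Suc t))) * FF f g y T (Suc t) x' \<partial>lborel)"
proof -
  interpret psf: product_sigma_finite "\<lambda>_::nat. lborel::'a measure" by (rule psf)
  have S: "{Suc t..T} = insert (Suc t) {Suc (Suc t)..T}" using tT by auto
  have m: "(\<lambda>z. ennreal (GG f g y T t x z)) \<in> borel_measurable (PiM (insert (Suc t) {Suc (Suc t)..T}) (\<lambda>_. lborel))"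
    using GG_meas1[where g=g and y=y and T=T and t=t and x=x, OF fm gm] unfolding S by simp
  have "FF f g y T t x = (\<integral>\<^sup>+ x'. (\<integral>\<^sup>+ w. ennreal (GG f g y T t x (w(Suc t := x'))) \<partial>PiM {Suc (Suc t)..T} (\<lambda>_. lborel)) \<partial>lborel)"
    unfolding FF_def S by (rule psf.product_nn_integral_insert_rev) (auto simp: m)
  also have "\<dots> = (\<integral>\<^sup>+ x'. (\<integral>\<^sup>+ w. ennreal (f x x' * g x' (y (Suc t))) * ennreal (GG f g y T (Suc t) x' w) \<partial>PiM {Suc (Suc t)..T} (\<lambda>_. lborel)) \<partial>lborel)"
    by (intro nn_integral_cong) (simp add: GG_upd[OF tT] ennreal_mult' fn gn)
  also have "\<dots> = (\<integral>\<^sup>+x'. ennreal (f x x' * g x' (y (Suc t))) * FF f g y T (Suc t) x' \<partial>lborel)"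
    unfolding FF_def
    by (intro nn_integral_cong nn_integral_cmult) (use GG_meas1[where g=g, OF fm gm] in simp)
  finally show ?thesis .
qed

lemma H_meas:
  fixes f :: "'a::euclidean_space \<Rightarrow> 'a \<Rightarrow> real"
  assumes fm: "(\<lambda>(x,x'). f x x') \<in> borel_measurable (lborel \<Otimes>\<^sub>M lborel)"
    and gm: "\<And>v. (\<lambda>x. g x v) \<in> borel_measurable lborel"
    and mm: "\<mu> \<in> borel_measurable lborel"
    and T: "(T::nat) \<ge> 1"
  shows "(\<lambda>z. \<mu> (z 1) * (\<Prod>t\<in>{2..T}. f (z (t - 1)) (z t)) * (\<Prod>t\<in>{1..T}. g (z t) (y t)))
     \<in> borel_measurable (PiM {1..T} (\<lambda>_. lborel))"
proof -
  have c: "(\<lambda>z. z j) \<in> measurable (PiM {1..T} (\<lambda>_. lborel)) (lborel::'a measure)"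
    if "j \<in> {1..T}" for j
    using that by measurable
  have m1: "(\<lambda>z. \<mu> (z 1)) \<in> borel_measurable (PiM {1..T} (\<lambda>_. lborel))"
  proof -
    have "1 \<in> {1..T}" using T by simp
    from measurable_comp[OF c[OF this] mm] show ?thesis by (simp add: comp_def)
  qed
  have m2: "(\<lambda>z. \<Prod>t\<in>{2..T}. f (z (t - 1)) (z t)) \<in> borel_measurable (PiM {1..T} (\<lambda>_. lborel))"
  proof (rule borel_measurable_prod)
    fix t assume t: "t \<in> {2..T}"
    then have "t - 1 \<in> {1..T}" "t \<in> {1..T}" by auto
    from measurable_comp[OF measurable_Pair[OF c[OF this(1)] c[OF this(2)]] fm]
    show "(\<lambda>z. f (z (t - 1)) (z t)) \<in> borel_measurable (PiM {1..T} (\<lambda>_. lborel))"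
      by (simp add: comp_def)
  qed
  have m3: "(\<lambda>z. \<Prod>t\<in>{1..T}. g (z t) (y t)) \<in> borel_measurable (PiM {1..T} (\<lambda>_. lborel))"
  proof (rule borel_measurable_prod)
    fix t assume t: "t \<in> {1..T}"
    from measurable_comp[OF c[OF t] gm]
    show "(\<lambda>z. g (z t) (y t)) \<in> borel_measurable (PiM {1..T} (\<lambda>_. lborel))"
      by (simp add: comp_def)
  qed
  show ?thesis using m1 m2 m3 by simp
qed

lemma H_upd:
  assumes T: "(T::nat) \<ge> 1"
  shows "\<mu> ((w(1 := x1)) 1) * (\<Prod>t\<in>{2..T}. f ((w(1 := x1)) (t - 1)) ((w(1 := x1)) t)) * (\<Prod>t\<in>{1..T}. g ((w(1 := x1)) t) (y t))
    = \<mu> x1 * g x1 (y 1) * GG f g y T 1 x1 w"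
proof -
  have S: "{1..T} = insert 1 {2..T}" using T by auto
  have "(\<Prod>t\<in>{2..T}. f ((w(1 := x1)) (t - 1)) ((w(1 := x1)) t)) = (\<Prod>t\<in>{2..T}. f (if t = 2 then x1 else w (t - 1)) (w t))"
    by (rule prod.cong) auto
  moreover have "(\<Prod>t\<in>{1..T}. g ((w(1 := x1)) t) (y t)) = g x1 (y 1) * (\<Prod>t\<in>{2..T}. g (w t) (y t))"
    unfolding S by (subst prod.insert) (auto intro!: prod.cong)
  moreover have "GG f g y T 1 x1 w = (\<Prod>t\<in>{2..T}. f (if t = 2 then x1 else w (t - 1)) (w t)) * (\<Prod>t\<in>{2..T}. g (w t) (y t))"
    unfolding GG_def by (simp add: prod.distrib numeral_2_eq_2)
  ultimately show ?thesis by (simp add: algebra_simps)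
qed

lemma L_eq:
  fixes f :: "'a::euclidean_space \<Rightarrow> 'a \<Rightarrow> real"
  assumes fm: "(\<lambda>(x,x'). f x x') \<in> borel_measurable (lborel \<Otimes>\<^sub>M lborel)"
    and gm: "\<And>v. (\<lambda>x. g x v) \<in> borel_measurable lborel"
    and mm: "\<mu> \<in> borel_measurable lborel"
    and fn: "\<And>x x'. f x x' \<ge> 0" and gn: "\<And>x v. g x v \<ge> 0" and mn: "\<And>x. \<mu> x \<ge> 0"
    and T: "T \<ge> 1"
  shows "hmm_L \<mu> f g y T = enn2real (\<integral>\<^sup>+x. ennreal (\<mu> x * g x (y 1)) * FF f g y T 1 x \<partial>lborel)"
proof -
  interpret psf: product_sigma_finite "\<lambda>_::nat. lborel::'a measure" by (rule psf)
  have S: "{1..T} = insert 1 {2..T}" using T by auto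
  let ?H = "\<lambda>z. \<mu> (z 1) * (\<Prod>t\<in>{2..T}. f (z (t - 1)) (z t)) * (\<Prod>t\<in>{1..T}. g (z t) (y t))"
  have Hm: "?H \<in> borel_measurable (PiM {1..T} (\<lambda>_. lborel))"
    by (rule H_meas[where g=g, OF fm gm mm T])
  have Hn: "\<And>z. ?H z \<ge> 0" by (intro mult_nonneg_nonneg prod_nonneg mn fn gn)
  have "hmm_L \<mu> f g y T = enn2real (\<integral>\<^sup>+z. ennreal (?H z) \<partial>PiM {1..T} (\<lambda>_. lborel))"
    unfolding hmm_L_def by (rule integral_eq_nn_integral[OF Hm]) (rule AE_I2, rule Hn)
  also have "(\<integral>\<^sup>+z. ennreal (?H z) \<partial>PiM {1..T} (\<lambda>_. lborel))
     = (\<integral>\<^sup>+ x1. (\<integral>\<^sup>+ w. ennreal (?H (w(1 := x1))) \<partial>PiM {2..T} (\<lambda>_. lborel)) \<partial>lborel)"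
    unfolding S by (rule psf.product_nn_integral_insert_rev) (use Hm S in auto)
  also have "\<dots> = (\<integral>\<^sup>+ x1. (\<integral>\<^sup>+ w. ennreal (\<mu> x1 * g x1 (y 1)) * ennreal (GG f g y T 1 x1 w) \<partial>PiM {2..T} (\<lambda>_. lborel)) \<partial>lborel)"
    by (intro nn_integral_cong, subst H_upd[OF T]) (simp add: ennreal_mult' fn gn mn)
  also have "\<dots> = (\<integral>\<^sup>+x. ennreal (\<mu> x * g x (y 1)) * FF f g y T 1 x \<partial>lborel)"
    unfolding FF_def
  proof (intro nn_integral_cong)
    fix x
    have e: "{2..T} = {Suc 1..T}" by simp
    show "(\<integral>\<^sup>+ w. ennreal (\<mu> x * g x (y 1)) * ennreal (GG f g y T 1 x w) \<partial>PiM {2..T} (\<lambda>_. lborel))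
        = ennreal (\<mu> x * g x (y 1)) * (\<integral>\<^sup>+ z. ennreal (GG f g y T 1 x z) \<partial>PiM {Suc 1..T} (\<lambda>_. lborel))"
      unfolding e by (rule nn_integral_cmult) (use GG_meas1[where g=g, OF fm gm] in simp)
  qed
  finally show ?thesis .
qed

theorem proposition2:
  fixes \<mu> :: "'a::euclidean_space \<Rightarrow> real"
    and f :: "'a \<Rightarrow> 'a \<Rightarrow> real"
    and g :: "'a \<Rightarrow> 'b::euclidean_space \<Rightarrow> real"
    and y :: "nat \<Rightarrow> 'b"
    and T N :: nat
  assumes T: "T \<ge> 1" and N: "N \<ge> 1"
    and mu_meas: "\<mu> \<in> borel_measurable lborel"
    and mu_nonneg: "\<And>x. \<mu> x \<ge> 0"
    and mu_dens: "(\<integral>\<^sup>+x. ennreal (\<mu> x) \<partial>lborel) = 1"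
    and f_meas: "(\<lambda>(x, x'). f x x') \<in> borel_measurable (lborel \<Otimes>\<^sub>M lborel)"
    and f_nonneg: "\<And>x x'. f x x' \<ge> 0"
    and f_dens: "\<And>x. (\<integral>\<^sup>+x'. ennreal (f x x') \<partial>lborel) = 1"
    and g_nonneg: "\<And>x v. g x v \<ge> 0"
    and g_bounded: "\<exists>B. \<forall>x v. g x v \<le> B"
    and g_cont: "continuous_on UNIV (\<lambda>(x, v). g x v)"
    and L_pos: "hmm_L \<mu> f g y T > 0"
    and psi_pos: "\<And>t x. t \<in> {1..T} \<Longrightarrow> psi_star f g y T t x > 0"
  shows "AE \<xi> in apf_law \<mu> f g y (psi_star f g y T) T N.
           apf_Z \<mu> f g y (psi_star f g y T) T N \<xi> = hmm_L \<mu> f g y T"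
proof -
  let ?\<psi> = "psi_star f g y T"
  let ?F = "FF f g y T"
  let ?L = "hmm_L \<mu> f g y T"
  have gm: "\<And>v. (\<lambda>x. g x v) \<in> borel_measurable lborel"
  proof -
    fix v
    have "continuous_on UNIV (\<lambda>x. (\<lambda>(x, v). g x v) (x, v))"
      by (rule continuous_on_compose2[OF g_cont]) (auto intro!: continuous_intros)
    then show "(\<lambda>x. g x v) \<in> borel_measurable lborel"
      using borel_measurable_continuous_onI by simp
  qed
  have FT: "?F T x = 1" for x
    unfolding FF_def GG_def by (simp add: PiM_empty nn_integral_count_space_finite)
  have hf: "hmm_future f g y T t x = enn2real (?F t x)" for t x
    unfolding hmm_future_def FF_def GG_def[symmetric]
    by (rule integral_eq_nn_integral[OF GG_meas1[where g=g, OF f_meas gm]])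
       (auto simp: GG_def intro!: prod_nonneg mult_nonneg_nonneg f_nonneg g_nonneg)
  have psi_eq: "?\<psi> t x = g x (y t) * enn2real (?F t x)" for t x
    by (cases "t = T") (simp_all add: psi_star_def FT hf)
  have Ffin: "?F t x \<noteq> \<infinity>" if "t \<in> {1..T}" for t x
  proof
    assume "?F t x = \<infinity>"
    then have "?\<psi> t x = 0" by (simp add: psi_eq)
    with psi_pos[OF that, of x] show False by simp
  qed
  have gpos: "g x (y t) > 0" and Fpos: "enn2real (?F t x) > 0" if "t \<in> {1..T}" for t x
    using psi_pos[OF that, of x] g_nonneg[of x "y t"] enn2real_nonneg[of "?F t x"]
    by (auto simp: psi_eq zero_less_mult_iff)
  have kap: "kapply f x (?\<psi> (Suc t)) = enn2real (?F t x)" if "t \<in> {1..<T}" for t x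
  proof -
    have st: "Suc t \<in> {1..T}" using that by auto
    have fxm: "(\<lambda>x'. f x x') \<in> borel_measurable lborel"
    proof -
      have "(\<lambda>x'. (x, x')) \<in> measurable lborel (lborel \<Otimes>\<^sub>M lborel)" by simp
      from measurable_comp[OF this f_meas] show ?thesis by (simp add: comp_def)
    qed
    have Fm: "?F (Suc t) \<in> borel_measurable lborel" by (rule FF_meas[where g=g, OF f_meas gm])
    have "kapply f x (?\<psi> (Suc t)) = (\<integral>x'. f x x' * (g x' (y (Suc t)) * enn2real (?F (Suc t) x')) \<partial>lborel)"
      unfolding kapply_def by (simp add: psi_eq)
    also have "\<dots> = enn2real (\<integral>\<^sup>+x'. ennreal (f x x' * (g x' (y (Suc t)) * enn2real (?F (Suc t) x'))) \<partial>lborel)"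
      by (rule integral_eq_nn_integral) (use fxm gm Fm in \<open>auto intro!: mult_nonneg_nonneg f_nonneg g_nonneg\<close>)
    also have "(\<integral>\<^sup>+x'. ennreal (f x x' * (g x' (y (Suc t)) * enn2real (?F (Suc t) x'))) \<partial>lborel)
       = (\<integral>\<^sup>+x'. ennreal (f x x' * g x' (y (Suc t))) * ?F (Suc t) x' \<partial>lborel)"
    proof (intro nn_integral_cong)
      fix x'
      have "ennreal (f x x' * (g x' (y (Suc t)) * enn2real (?F (Suc t) x')))
          = ennreal (f x x' * g x' (y (Suc t))) * ennreal (enn2real (?F (Suc t) x'))"
        by (simp only: mult.assoc[symmetric]) (rule ennreal_mult'', simp)
      also have "ennreal (enn2real (?F (Suc t) x')) = ?F (Suc t) x'"
        using Ffin[OF st] by (simp add: ennreal_enn2real_if less_top)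
      finally show "ennreal (f x x' * (g x' (y (Suc t)) * enn2real (?F (Suc t) x'))) = ennreal (f x x' * g x' (y (Suc t))) * ?F (Suc t) x'" .
    qed
    also have "\<dots> = ?F t x"
      using that by (intro FF_rec[where g=g, OF f_meas gm f_nonneg g_nonneg, symmetric]) auto
    finally show ?thesis .
  qed
  have tilde0: "psi_tilde0 \<mu> ?\<psi> = ?L"
  proof -
    have "psi_tilde0 \<mu> ?\<psi> = (\<integral>x. \<mu> x * (g x (y 1) * enn2real (?F 1 x)) \<partial>lborel)"
      unfolding psi_tilde0_def by (simp add: psi_eq)
    also have "\<dots> = enn2real (\<integral>\<^sup>+x. ennreal (\<mu> x * (g x (y 1) * enn2real (?F 1 x))) \<partial>lborel)"
      by (rule integral_eq_nn_integral)
         (use mu_meas gm FF_meas[where g=g, OF f_meas gm] in \<open>auto intro!: mult_nonneg_nonneg mu_nonneg g_nonneg\<close>)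
    also have "(\<integral>\<^sup>+x. ennreal (\<mu> x * (g x (y 1) * enn2real (?F 1 x))) \<partial>lborel)
       = (\<integral>\<^sup>+x. ennreal (\<mu> x * g x (y 1)) * ?F 1 x \<partial>lborel)"
    proof (intro nn_integral_cong)
      fix x
      have one: "(1::nat) \<in> {1..T}" using T by simp
      have "ennreal (\<mu> x * (g x (y 1) * enn2real (?F 1 x)))
          = ennreal (\<mu> x * g x (y 1)) * ennreal (enn2real (?F 1 x))"
        by (simp only: mult.assoc[symmetric]) (rule ennreal_mult'', simp)
      also have "ennreal (enn2real (?F 1 x)) = ?F 1 x"
        using Ffin[OF one] by (simp add: ennreal_enn2real_if less_top)
      finally show "ennreal (\<mu> x * (g x (y 1) * enn2real (?F 1 x))) = ennreal (\<mu> x * g x (y 1)) * ?F 1 x" .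
    qed
    also have "enn2real \<dots> = ?L"
      by (rule L_eq[where g=g, OF f_meas gm mu_meas f_nonneg g_nonneg mu_nonneg T, symmetric])
    finally show ?thesis .
  qed
  have twg: "tw_g \<mu> f g y ?\<psi> T t x = (if t = 1 then ?L else 1)" if "t \<in> {1..T}" for t x
  proof -
    have gp: "g x (y t) > 0" and Fp: "enn2real (?F t x) > 0" using gpos[OF that] Fpos[OF that] by auto
    have pt: "psi_tilde f ?\<psi> T t x = (if t = T then 1 else enn2real (?F t x))"
      using kap[of t x] that by (auto simp: psi_tilde_def)
    have ps: "?\<psi> t x = g x (y t) * (if t = T then 1 else enn2real (?F t x))"
      by (simp add: psi_eq FT)
    have Q: "?\<psi> t x = g x (y t) * psi_tilde f ?\<psi> T t x" unfolding ps pt by simp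
    have Pnz: "psi_tilde f ?\<psi> T t x \<noteq> 0" unfolding pt using Fp by simp
    show ?thesis
      unfolding tw_g_def using Q gp Pnz by (cases "t = 1") (simp_all add: tilde0)
  qed
  show ?thesis
  proof (rule AE_I2)
    fix \<xi>
    have "apf_Z \<mu> f g y ?\<psi> T N \<xi> = (\<Prod>t\<in>{1..T}. (if t = 1 then ?L else 1))"
      unfolding apf_Z_def
    proof (rule prod.cong[OF refl])
      fix t assume t: "t \<in> {1..T}"
      show "1 / real N * (\<Sum>i\<in>{1..N}. tw_g \<mu> f g y ?\<psi> T t (\<xi> (t, i))) = (if t = 1 then ?L else 1)"
        using N by (simp add: twg[OF t])
    qed
    also have "\<dots> = ?L"
      using T by (simp add: prod.If_cases Int_absorb1 )
    finally show "apf_Z \<mu> f g y ?\<psi> T N \<xi> = ?L" .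
  qed
qed

end
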